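(* Let $\Omega\subseteq\mathbb{C}$ be an open disc centered at the origin, $M:\Omega\to\mathbb{C}^{n\times n}$ analytic with $M(0)$ invertible, written as $M(\lambda)=\sum_{i=1}^m M_if_i(\lambda)$ with $f_i$ scalar analytic on $\Omega$, and let $\mathcal{B}$ be the operator defined in the context. Let $N\ge 0$ be an integer, $Y\in\mathbb{C}^{n\times p}$, $S\in\mathbb{C}^{p\times p}$ invertible with $\sigma(S)\subset\Omega$, $c\in\mathbb{C}^p$ and $x_0,\ldots,x_{N-1}\in\mathbb{C}^n$. Suppose $$\varphi(\theta)=Y\exp_{N-1}(\theta S)c+\sum_{j=0}^{N-1}\theta^j x_j.$$ Then $$(\mathcal{B}\varphi)(\theta)=Y\exp_N(\theta S)c_+ +\sum_{j=0}^{N}\theta^j x_{+,j},$$ where $c_+=S^{-1}c$, $x_{+,j}=\frac{1}{j}x_{j-1}$ for $j=1,\ldots,N$, and $$x_{+,0}=-M(0)^{-1}\Big(\mathbb{M}_N(Y,S)c_+ +\sum_{i=1}^N M^{(i)}(0)x_{+,i}\Big).$$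
   Context: $B(\lambda)=M(0)^{-1}\frac{M(0)-M(\lambda)}{\lambda}$ for $\lambda\ne0$, extended analytically to $0$. $\mathcal{B}$ acts on smooth $\varphi:\mathbb{R}\to\mathbb{C}^n$ (for which the series below converges) by $(\mathcal{B}\varphi)(\theta)=\int_0^\theta\varphi(\hat\theta)d\hat\theta+\sum_{i=0}^\infty\frac{1}{i!}B^{(i)}(0)\varphi^{(i)}(0)$. For an integer $N\ge -1$, $\exp_N(\theta S):=\sum_{k=N+1}^\infty\frac{\theta^kS^k}{k!}$ (so $\exp_{-1}(\theta S)=\exp(\theta S)$), i.e. the remainder of the Taylor expansion of the exponential after order $N$. $\mathbb{M}(Y,S):=\sum_{i=1}^m M_iYf_i(S)$ and $\mathbb{M}_N(Y,S):=\sum_{k=N+1}^\infty\frac{1}{k!}M^{(k)}(0)YS^k=\mathbb{M}(Y,S)-\sum_{k=0}^N\frac{1}{k!}M^{(k)}(0)YS^k$. When $N=0$ the polynomial part of $\varphi$ is empty and the sum in $x_{+,0}$ is empty. *)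

theory Defs
  imports "HOL-Analysis.Analysis"
begin

text \<open>Complex matrices are rendered as \<open>complex^'q^'p\<close> (p rows, q columns),
  vectors as \<open>complex^'p\<close>; \<open>**\<close> is matrix product, \<open>*v\<close> matrix-vector product.\<close>

definition csm :: "complex \<Rightarrow> complex^'q^'p \<Rightarrow> complex^'q^'p" where
  "csm a A = (\<chi> i j. a * A$i$j)"

definition matpow :: "complex^'p^'p \<Rightarrow> nat \<Rightarrow> complex^'p^'p" where
  "matpow S k = (((**) S) ^^ k) (mat 1)"

definition mspectrum :: "complex^'p^'p \<Rightarrow> complex set" where
  "mspectrum S = {l. \<exists>v. v \<noteq> 0 \<and> S *v v = l *s v}"

definition mderiv :: "nat \<Rightarrow> (complex \<Rightarrow> complex^'q^'p) \<Rightarrow> complex \<Rightarrow> complex^'q^'p" where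
  "mderiv k F z = (\<chi> i j. (deriv ^^ k) (\<lambda>w. F w $ i $ j) z)"

definition vderiv :: "nat \<Rightarrow> (real \<Rightarrow> complex^'n) \<Rightarrow> real \<Rightarrow> complex^'n" where
  "vderiv k g = ((\<lambda>h t. vector_derivative h (at t)) ^^ k) g"

definition oint :: "(real \<Rightarrow> complex^'n) \<Rightarrow> real \<Rightarrow> complex^'n" where
  "oint g \<theta> = (if 0 \<le> \<theta> then integral {0..\<theta>} g else - integral {\<theta>..0} g)"

definition Bfun :: "(complex \<Rightarrow> complex^'n^'n) \<Rightarrow> complex \<Rightarrow> complex^'n^'n" where
  "Bfun M l = (if l = 0
      then Lim (at 0) (\<lambda>w. csm (1 / w) (matrix_inv (M 0) ** (M 0 - M w)))
      else csm (1 / l) (matrix_inv (M 0) ** (M 0 - M l)))"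

definition Bterm :: "(complex \<Rightarrow> complex^'n^'n) \<Rightarrow> (real \<Rightarrow> complex^'n) \<Rightarrow> nat \<Rightarrow> complex^'n" where
  "Bterm M g i = (1 / of_nat (fact i)) *s (mderiv i (Bfun M) 0 *v vderiv i g 0)"

definition Bop :: "(complex \<Rightarrow> complex^'n^'n) \<Rightarrow> (real \<Rightarrow> complex^'n) \<Rightarrow> real \<Rightarrow> complex^'n" where
  "Bop M g \<theta> = oint g \<theta> + (\<Sum>i. Bterm M g i)"

text \<open>\<open>exp_N(\<theta> S) c = \<Sum>_{k \<ge> N+1} \<theta>^k S^k c / k!\<close>, for integer \<open>N \<ge> -1\<close>.\<close>
definition expNv :: "int \<Rightarrow> complex \<Rightarrow> complex^'p^'p \<Rightarrow> complex^'p \<Rightarrow> complex^'p" where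
  "expNv N t S c = (\<Sum>k. if int k > N then (t ^ k / of_nat (fact k)) *s (matpow S k *v c) else 0)"

definition MMN :: "(complex \<Rightarrow> complex^'n^'n) \<Rightarrow> nat \<Rightarrow> complex^'p^'n \<Rightarrow> complex^'p^'p \<Rightarrow> complex^'p^'n" where
  "MMN M N Y S = (\<Sum>k. if k > N then csm (1 / of_nat (fact k)) (mderiv k M 0 ** Y ** matpow S k) else 0)"

end

theory Submission
  imports Defs "HOL-Complex_Analysis.Complex_Analysis"
begin


no_notation fps_nth (infixl \<open>$\<close> 75)

lemma coeff_ident:
  fixes a :: "nat \<Rightarrow> complex" and f :: "complex \<Rightarrow> complex"
  assumes d: "\<delta> > 0" and s: "\<And>z. norm z < \<delta> \<Longrightarrow> (\<lambda>k. a k * z^k) sums f z"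
  shows "(deriv ^^ n) f 0 = fact n * a n"
proof -
  let ?F = "Abs_fps a"
  have r: "fps_conv_radius ?F \<ge> \<delta>" unfolding fps_conv_radius_def
  proof (rule conv_radius_geI_ex)
    fix r :: real assume "0 < r" "ereal r < ereal \<delta>"
    then show "\<exists>z. norm z = r \<and> summable (\<lambda>n. fps_nth ?F n * z^n)"
      using s[of "of_real r"] by (intro exI[of _ "of_real r"]) (auto simp: summable_def)
  qed
  have "eventually (\<lambda>z. eval_fps ?F z = f z) (nhds 0)"
    unfolding eventually_nhds
    by (rule exI[of _ "ball 0 \<delta>"]) (use d s in \<open>auto simp: eval_fps_def sums_iff\<close>)
  moreover have "fps_conv_radius ?F > 0" using r d
    by (metis ereal_less(2) order_less_le_trans zero_ereal_def)
  ultimately have "f has_fps_expansion ?F" by (simp add: has_fps_expansion_def)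
  from fps_nth_fps_expansion[OF this, of n] show ?thesis by simp
qed

lemma taylor_abs_summable:
  fixes h :: "complex \<Rightarrow> complex"
  assumes "h holomorphic_on ball 0 r" "0 \<le> \<rho>" "\<rho> < r"
  shows "summable (\<lambda>k. norm ((deriv ^^ k) h 0 / fact k) * \<rho>^k)"
proof -
  have le: "fps_conv_radius (fps_expansion h 0) \<ge> ereal r"
    by (rule conv_radius_fps_expansion) (use assms in simp)
  have lt: "ereal \<rho> < ereal r" using assms by simp
  have n: "norm (of_real \<rho> :: complex) = \<rho>" using assms by simp
  have "ereal (norm (of_real \<rho> :: complex)) < fps_conv_radius (fps_expansion h 0)"
    unfolding n using lt le by (rule order_less_le_trans)
  from norm_summable_fps[OF this]
  have "summable (\<lambda>n. cmod ((deriv ^^ n) h 0 * of_real \<rho> ^ n / fact n))"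
    by (simp add: fps_expansion_def)
  moreover have "(\<lambda>n. cmod ((deriv ^^ n) h 0 * of_real \<rho> ^ n / fact n))
     = (\<lambda>k. norm ((deriv ^^ k) h 0 / fact k) * \<rho>^k)"
    by (rule ext) (use assms(2) in \<open>simp add: norm_mult norm_divide norm_power\<close>)
  ultimately show ?thesis by simp
qed

lemma matpow_0 [simp]: "matpow S 0 = mat 1"
  by (simp add: matpow_def)

lemma matpow_Suc: "matpow S (Suc k) = S ** matpow S k"
  by (simp add: matpow_def)

lemma matpow_Suc': "matpow S (Suc k) = matpow S k ** S"
proof (induction k)
  case 0 then show ?case by (simp add: matpow_Suc)
next
  case (Suc k)
  have "matpow S (Suc (Suc k)) = S ** (matpow S k ** S)" by (subst matpow_Suc) (simp only: Suc)
  also have "\<dots> = matpow S (Suc k) ** S" by (simp add: matpow_Suc matrix_mul_assoc)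
  finally show ?case .
qed

lemma matrix_inv_props:
  fixes A :: "'a::semiring_1^'n^'n"
  assumes "invertible A"
  shows "A ** matrix_inv A = mat 1" "matrix_inv A ** A = mat 1"
proof -
  from assms obtain B where "A ** B = mat 1 \<and> B ** A = mat 1" unfolding invertible_def by blast
  then have "A ** matrix_inv A = mat 1 \<and> matrix_inv A ** A = mat 1"
    unfolding matrix_inv_def by (rule someI)
  then show "A ** matrix_inv A = mat 1" "matrix_inv A ** A = mat 1" by auto
qed

lemma vec_sumsI:
  fixes f :: "nat \<Rightarrow> 'a::real_normed_vector^'n"
  assumes "\<And>i. (\<lambda>k. f k $ i) sums (a $ i)"
  shows "f sums a"
  using assms unfolding sums_def by (intro vec_tendstoI) (simp add: sum_component)

lemma norm_vec_le_sum: "norm (x :: 'a::real_normed_vector^'n) \<le> (\<Sum>i\<in>UNIV. norm (x $ i))"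
  unfolding norm_vec_def by (rule L2_set_le_sum) simp

lemma matpow_entry_bound:
  fixes S :: "complex^'p^'p"
  obtains K :: real where "K \<ge> 1" "\<And>m i j. norm (matpow S m $ i $ j) \<le> K ^ m"
proof -
  define K where "K = 1 + (\<Sum>i\<in>UNIV. \<Sum>l\<in>UNIV. norm (S $ i $ l))"
  have K1: "K \<ge> 1" unfolding K_def by (simp add: sum_nonneg)
  have rowK: "(\<Sum>l\<in>UNIV. norm (S $ i $ l)) \<le> K" for i
  proof -
    have "(\<Sum>l\<in>UNIV. norm (S $ i $ l)) \<le> (\<Sum>i\<in>UNIV. \<Sum>l\<in>UNIV. norm (S $ i $ l))"
      by (rule member_le_sum) (auto simp: sum_nonneg)
    then show ?thesis unfolding K_def by simp
  qed
  have "norm (matpow S m $ i $ j) \<le> K ^ m" for m i j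
  proof (induction m arbitrary: i j)
    case 0 then show ?case using K1 by (simp add: mat_def)
  next
    case (Suc m)
    have "norm (matpow S (Suc m) $ i $ j) = norm (\<Sum>l\<in>UNIV. S $ i $ l * matpow S m $ l $ j)"
      by (simp add: matpow_Suc matrix_matrix_mult_def)
    also have "\<dots> \<le> (\<Sum>l\<in>UNIV. norm (S $ i $ l) * K ^ m)"
      by (rule order_trans[OF norm_sum sum_mono]) (simp add: norm_mult mult_left_mono Suc)
    also have "\<dots> = (\<Sum>l\<in>UNIV. norm (S $ i $ l)) * K ^ m" by (simp add: sum_distrib_right)
    also have "\<dots> \<le> K * K ^ m" using rowK K1 by (intro mult_right_mono) auto
    finally show ?case by simp
  qed
  then show ?thesis using K1 that by blast
qed

lemma det_zero_kernel:
  fixes A :: "'a::field^'n^'n"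
  assumes "det A = 0"
  obtains v where "v \<noteq> 0" "A *v v = 0"
proof -
  have "\<not> inj ((*v) A)"
    using det_nz_iff_inj_gen[of "(*v) A"] assms by simp
  then obtain x y where "x \<noteq> y" "A *v x = A *v y" unfolding inj_def by blast
  then have "x - y \<noteq> 0" "A *v (x - y) = 0" by (auto simp: matrix_vector_mult_diff_distrib)
  then show ?thesis using that by blast
qed

lemma det_holo:
  fixes F :: "complex \<Rightarrow> complex^'n^'n"
  assumes "\<And>i j. (\<lambda>w. F w $ i $ j) holomorphic_on U"
  shows "(\<lambda>w. det (F w)) holomorphic_on U"
  unfolding det_def by (intro holomorphic_intros assms)

lemma neumann:
  fixes S :: "complex^'p^'p"
  assumes K: "K \<ge> 1" "\<And>m i j. norm (matpow S m $ i $ j) \<le> K ^ m"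
    and w: "norm w < 1 / K"
  shows "(mat 1 - csm w S) *v (\<chi> k. \<Sum>m. w^m * matpow S m $ k $ l) = (\<chi> i. if i = l then 1 else 0)"
proof -
  define a where "a j m = w^m * matpow S m $ j $ l" for j m
  have wK: "norm w * K < 1" using w K(1) by (simp add: field_simps)
  have sa: "summable (a j)" for j
  proof (rule summable_comparison_test[where g="\<lambda>m. (norm w * K)^m"])
    show "\<exists>N. \<forall>n\<ge>N. norm (a j n) \<le> (norm w * K) ^ n"
      by (auto simp: a_def norm_mult norm_power power_mult_distrib intro!: mult_left_mono K(2))
    show "summable (\<lambda>m. (norm w * K)^m)"
      using wK K(1) by (intro summable_geometric) (simp add: abs_of_nonneg)
  qed
  have step: "(\<Sum>j\<in>UNIV. S $ i $ j * a j m) = w^m * matpow S (Suc m) $ i $ l" for i m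
    by (simp add: a_def matpow_Suc matrix_matrix_mult_def sum_distrib_left mult_ac)
  have "((mat 1 - csm w S) *v (\<chi> k. suminf (a k))) $ i = (if i = l then 1 else 0)" for i
  proof -
    have "((mat 1 - csm w S) *v (\<chi> k. suminf (a k))) $ i
        = (\<Sum>j\<in>UNIV. ((if i = j then 1 else 0) - w * S $ i $ j) * suminf (a j))"
      by (simp add: matrix_vector_mult_def mat_def csm_def)
    also have "\<dots> = (\<Sum>j\<in>UNIV. (if i = j then suminf (a j) else 0)) - (\<Sum>j\<in>UNIV. w * (S $ i $ j * suminf (a j)))"
      by (subst sum_subtractf[symmetric]) (rule sum.cong, auto simp: algebra_simps)
    also have "\<dots> = suminf (a i) - w * (\<Sum>j\<in>UNIV. S $ i $ j * suminf (a j))"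
      by (simp add: sum_distrib_left)
    also have "(\<Sum>j\<in>UNIV. S $ i $ j * suminf (a j)) = (\<Sum>j\<in>UNIV. \<Sum>m. S $ i $ j * a j m)"
      using sa by (simp add: suminf_mult)
    also have "\<dots> = (\<Sum>m. \<Sum>j\<in>UNIV. S $ i $ j * a j m)"
      by (rule suminf_sum[symmetric]) (intro summable_mult sa)
    also have "\<dots> = (\<Sum>m. w^m * matpow S (Suc m) $ i $ l)" by (simp add: step)
    also have "w * \<dots> = (\<Sum>m. a i (Suc m))"
    proof -
      have "summable (\<lambda>m. w^m * matpow S (Suc m) $ i $ l)"
      proof (rule summable_comparison_test[where g="\<lambda>m. K * (norm w * K)^m"])
        show "\<exists>N. \<forall>n\<ge>N. norm (w^n * matpow S (Suc n) $ i $ l) \<le> K * (norm w * K) ^ n"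
        proof (intro exI allI impI)
          fix n :: nat
          have "norm (w^n * matpow S (Suc n) $ i $ l) \<le> norm w ^ n * K ^ Suc n"
            unfolding norm_mult norm_power by (intro mult_left_mono K(2)) auto
          then show "norm (w^n * matpow S (Suc n) $ i $ l) \<le> K * (norm w * K) ^ n"
            by (simp add: power_mult_distrib mult_ac)
        qed
        show "summable (\<lambda>m. K * (norm w * K)^m)"
          using wK K(1) by (intro summable_mult summable_geometric) (simp add: abs_of_nonneg)
      qed
      then show ?thesis by (subst suminf_mult[symmetric]) (auto simp: a_def mult_ac)
    qed
    also have "(\<Sum>m. a i (Suc m)) = suminf (a i) - a i 0"
      using sa by (rule suminf_split_head)
    finally show ?thesis by (simp add: a_def[of i 0] mat_def)
  qed
  then show ?thesis by (simp add: vec_eq_iff a_def[abs_def])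
qed

lemma neumann_summable:
  fixes S :: "complex^'p^'p"
  assumes K: "K \<ge> 1" "\<And>m i j. norm (matpow S m $ i $ j) \<le> K ^ m"
    and w: "norm w < 1 / K"
  shows "summable (\<lambda>m. w^m * matpow S m $ k $ l)"
proof (rule summable_comparison_test[where g="\<lambda>m. (norm w * K)^m"])
  have wK: "norm w * K < 1" using w K(1) by (simp add: field_simps)
  show "\<exists>N. \<forall>n\<ge>N. norm (w^n * matpow S n $ k $ l) \<le> (norm w * K) ^ n"
    by (auto simp: norm_mult norm_power power_mult_distrib intro!: mult_left_mono K(2))
  show "summable (\<lambda>m. (norm w * K)^m)"
    using wK K(1) by (intro summable_geometric) (simp add: abs_of_nonneg)
qed

lemma csm_mult_vec: "csm w S *v v = w *s (S *v v)"
  by (simp add: vec_eq_iff csm_def matrix_vector_mult_def sum_distrib_left mult_ac)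

lemma spectral_bound:
  fixes S :: "complex^'p^'p"
  assumes spec: "mspectrum S \<subseteq> ball 0 r" and r: "r > 0"
  obtains \<rho> C where "0 < \<rho>" "\<rho> < r" "\<And>m i j. norm (matpow S m $ i $ j) \<le> C * \<rho>^m"
proof -
  define A where "A w = mat 1 - csm w S" for w
  define D where "D w = det (A w)" for w
  have Aent: "A w $ i $ j = (if i = j then 1 else 0) - w * S $ i $ j" for w i j
    by (simp add: A_def mat_def csm_def)
  have Ahol: "(\<lambda>w. A w $ i $ j) holomorphic_on U" for i j U
    unfolding Aent by (intro holomorphic_intros)
  have Dhol: "D holomorphic_on UNIV"
    unfolding D_def[abs_def] by (rule det_holo) (rule Ahol)
  have Dnz: "D w \<noteq> 0" if "norm w \<le> 1/r" for w
  proof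
    assume "D w = 0"
    then obtain v where v: "v \<noteq> 0" "A w *v v = 0" using det_zero_kernel unfolding D_def by blast
    then have vv: "v = w *s (S *v v)"
      by (simp add: A_def matrix_vector_mult_diff_rdistrib csm_mult_vec)
    have w0: "w \<noteq> 0" using v vv by auto
    have "S *v v = (1/w) *s v" using vv w0 by (metis (no_types, lifting) divide_self_if vector_smult_assoc vector_smult_lid mult.commute nonzero_divide_eq_eq)
    then have "1/w \<in> mspectrum S" unfolding mspectrum_def using v by blast
    then have "norm (1/w) < r" using spec by auto
    moreover have "norm (1/w) \<ge> r"
      using that w0 r by (simp add: norm_divide field_simps)
    ultimately show False by simp
  qed
  have openU: "open {w. D w \<noteq> 0}"
    using holomorphic_on_imp_continuous_on[OF Dhol] by (intro open_Collect_neq) auto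
  have "cball 0 (1/r) \<subseteq> {w. D w \<noteq> 0}" using Dnz by auto
  from compact_subset_open_imp_ball_epsilon_subset[OF compact_cball openU this]
  obtain \<epsilon> where \<epsilon>: "\<epsilon> > 0" "(\<Union>x\<in>cball 0 (1/r). ball x \<epsilon>) \<subseteq> {w. D w \<noteq> 0}" by blast
  define R where "R = 1/r + \<epsilon>"
  have DnzR: "D w \<noteq> 0" if "norm w < R" for w
  proof (cases "norm w \<le> 1/r")
    case True then show ?thesis using Dnz by auto
  next
    case False
    then have nw: "norm w > 1/r" "w \<noteq> 0" using r by auto
    define x where "x = of_real (1/r / norm w) * w"
    have nx: "norm x = 1/r" unfolding x_def norm_mult norm_of_real using nw r by simp
    have eq: "x - w = of_real (1/r / norm w - 1) * w" by (simp add: x_def algebra_simps)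
    have c: "1/r / norm w - 1 < 0" using nw r by (simp add: field_simps)
    have "dist x w = norm (of_real (1/r / norm w - 1) * w)" using eq by (simp add: dist_norm)
    also have "\<dots> = (1 - 1/r / norm w) * norm w" unfolding norm_mult norm_of_real using c by simp
    also have "\<dots> = norm w - 1/r" using nw by (simp add: field_simps)
    also have "\<dots> < \<epsilon>" using that R_def by simp
    finally have "w \<in> ball x \<epsilon>" by simp
    moreover have "x \<in> cball 0 (1/r)" using nx by simp
    ultimately show ?thesis using \<epsilon>(2) by blast
  qed
  obtain K where K: "K \<ge> 1" "\<And>m i j. norm (matpow S m $ i $ j) \<le> K ^ m"
    using matpow_entry_bound[of S] by blast
  define Rf where "Rf k l w = det (\<chi> i j. if j = k then (if i = l then 1 else 0) else A w $ i $ j) / D w" for k l w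
  have Rhol: "Rf k l holomorphic_on ball 0 R" for k l
  proof -
    have "(\<lambda>w. det (\<chi> i j. if j = k then (if i = l then 1 else 0) else A w $ i $ j)) holomorphic_on ball 0 R"
      by (rule det_holo) (case_tac "j = k"; simp add: Ahol)
    moreover have "D holomorphic_on ball 0 R" using Dhol by (rule holomorphic_on_subset) simp
    ultimately have "(\<lambda>w. Rf k l w) holomorphic_on ball 0 R"
      unfolding Rf_def using DnzR by (intro holomorphic_on_divide) auto
    then show ?thesis by simp
  qed
  define \<delta> where "\<delta> = min (1/K) R"
  have R0: "R > 0" unfolding R_def using r \<epsilon>(1) by (metis add_pos_pos divide_pos_pos zero_less_one)
  then have \<delta>: "\<delta> > 0" using K unfolding \<delta>_def by simp
  have Rser: "(\<lambda>m. matpow S m $ k $ l * w^m) sums Rf k l w" if "norm w < \<delta>" for k l w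
  proof -
    have w1: "norm w < 1/K" "norm w < R" using that by (auto simp: \<delta>_def)
    have "A w *v (\<chi> k. \<Sum>m. w^m * matpow S m $ k $ l) = (\<chi> i. if i = l then 1 else 0)"
      unfolding A_def by (rule neumann[OF K w1(1)])
    then have "(\<chi> k. \<Sum>m. w^m * matpow S m $ k $ l) =
       (\<chi> k. det (\<chi> i j. if j = k then (\<chi> i. if i = l then 1 else 0) $ i else A w $ i $ j) / det (A w))"
      using cramer[of "A w"] DnzR[OF w1(2)] unfolding D_def by blast
    then have "(\<Sum>m. w^m * matpow S m $ k $ l) = Rf k l w"
      unfolding Rf_def D_def by (simp add: vec_eq_iff cong: if_cong)
    moreover have "summable (\<lambda>m. w^m * matpow S m $ k $ l)" by (rule neumann_summable[OF K w1(1)])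
    ultimately have "(\<lambda>m. w^m * matpow S m $ k $ l) sums Rf k l w" by (metis summable_sums)
    then show ?thesis by (simp add: mult.commute)
  qed
  have coef: "(deriv ^^ m) (Rf k l) 0 = fact m * matpow S m $ k $ l" for m k l
    by (rule coeff_ident[OF \<delta>]) (rule Rser)
  define w0 where "w0 = 1/r + \<epsilon>/2"
  have ir: "0 < 1/r" using r by simp
  have w0: "w0 > 1/r" "w0 < R" "w0 > 0" unfolding w0_def R_def using \<epsilon>(1) ir by linarith+
  define Cf where "Cf k l = (\<Sum>m. norm (matpow S m $ k $ l) * w0^m)" for k l
  have sm: "summable (\<lambda>m. norm (matpow S m $ k $ l) * w0^m)" for k l
    using taylor_abs_summable[OF Rhol, of w0 k l] w0 by (simp add: coef norm_mult)
  have Cf: "norm (matpow S m $ k $ l) * w0^m \<le> Cf k l" for m k l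
    using sum_le_suminf[OF sm[of k l], of "{m}"] w0 unfolding Cf_def by simp
  have Cf0: "Cf k l \<ge> 0" for k l using Cf[of 0 k l] by (meson norm_ge_zero order_trans mult_nonneg_nonneg zero_le_power w0(3) less_imp_le)
  define C where "C = (\<Sum>k\<in>UNIV. \<Sum>l\<in>UNIV. Cf k l)"
  have CfC: "Cf k l \<le> C" for k l
  proof -
    have "Cf k l \<le> (\<Sum>l\<in>UNIV. Cf k l)" by (rule member_le_sum) (auto simp: Cf0)
    also have "\<dots> \<le> C" unfolding C_def by (rule member_le_sum) (auto simp: Cf0 sum_nonneg)
    finally show ?thesis .
  qed
  show ?thesis
  proof
    show "0 < 1/w0" using w0 by simp
    show "1/w0 < r" using w0 r by (simp add: field_simps)
    fix m i j
    have "norm (matpow S m $ i $ j) \<le> Cf i j / w0^m"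
      using Cf[of m i j] w0 by (simp add: field_simps)
    also have "\<dots> \<le> C / w0^m" using CfC w0 by (simp add: divide_right_mono)
    finally show "norm (matpow S m $ i $ j) \<le> C * (1/w0)^m" by (simp add: power_one_over)
  qed
qed

lemma Bfun_deriv:
  fixes M :: "complex \<Rightarrow> complex^'n^'n"
  assumes r: "r > 0" and hol: "\<And>a b. (\<lambda>w. M w $ a $ b) holomorphic_on ball 0 r"
  shows "mderiv i (Bfun M) 0 = - csm (1 / of_nat (Suc i)) (matrix_inv (M 0) ** mderiv (Suc i) M 0)"
proof -
  define Mi where "Mi = matrix_inv (M 0)"
  define h where "h a b w = (\<Sum>k\<in>UNIV. Mi $ a $ k * M w $ k $ b)" for a b w
  define \<alpha> where "\<alpha> a b j = (\<Sum>k\<in>UNIV. Mi $ a $ k * ((deriv ^^ j) (\<lambda>w. M w $ k $ b) 0 / fact j))" for a b j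
  have hser: "(\<lambda>j. \<alpha> a b j * w^j) sums h a b w" if "norm w < r" for a b w
  proof -
    have "(\<lambda>j. (deriv ^^ j) (\<lambda>w. M w $ k $ b) 0 / fact j * (w - 0)^j) sums M w $ k $ b" for k
      by (rule holomorphic_power_series[OF hol]) (use that in simp)
    then have "(\<lambda>j. \<Sum>k\<in>UNIV. Mi $ a $ k * ((deriv ^^ j) (\<lambda>w. M w $ k $ b) 0 / fact j * w^j)) sums h a b w"
      unfolding h_def by (intro sums_sum sums_mult) simp
    moreover have "(\<Sum>k\<in>UNIV. Mi $ a $ k * ((deriv ^^ j) (\<lambda>w. M w $ k $ b) 0 / fact j * w^j)) = \<alpha> a b j * w^j" for j
      unfolding \<alpha>_def sum_distrib_right by (intro sum.cong refl) (simp add: mult_ac)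
    ultimately show ?thesis by simp
  qed
  have hhol: "h a b holomorphic_on ball 0 r" for a b
  proof -
    have "(\<lambda>w. h a b w) holomorphic_on ball 0 r" unfolding h_def by (intro holomorphic_intros hol)
    then show ?thesis by simp
  qed
  have h0: "h a b 0 = \<alpha> a b 0" for a b
    using hser[of 0 a b] r by simp
  have hd: "deriv (h a b) 0 = \<alpha> a b 1" for a b
  proof -
    have "(deriv ^^ 1) (h a b) 0 = fact 1 * \<alpha> a b 1" by (rule coeff_ident[OF r]) (rule hser)
    then show ?thesis by simp
  qed
  have Bent: "Bfun M w $ a $ b = (h a b 0 - h a b w) / w" if "w \<noteq> 0" for w a b
    using that by (simp add: Bfun_def csm_def matrix_matrix_mult_def h_def Mi_def
        sum_subtractf right_diff_distrib diff_divide_distrib)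
  have Bser: "(\<lambda>j. - \<alpha> a b (Suc j) * w^j) sums Bfun M w $ a $ b" if "norm w < r" for a b w
  proof (cases "w = 0")
    case False
    have "(\<lambda>j. \<alpha> a b (Suc j) * w^(Suc j)) sums (h a b w - \<alpha> a b 0 * w^0)"
      using hser[OF that, of a b] by (subst sums_Suc_iff) simp
    then have "(\<lambda>j. (-1/w) * (\<alpha> a b (Suc j) * w^(Suc j))) sums ((-1/w) * (h a b w - \<alpha> a b 0))"
      by (intro sums_mult) simp
    moreover have "(\<lambda>j. (-1/w) * (\<alpha> a b (Suc j) * w^(Suc j))) = (\<lambda>j. - \<alpha> a b (Suc j) * w^j)"
      using False by (auto simp: field_simps)
    moreover have "(-1/w) * (h a b w - \<alpha> a b 0) = Bfun M w $ a $ b"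
      using False by (simp add: Bent h0 field_simps)
    ultimately show ?thesis by simp
  next
    case True
    define F where "F w = csm (1 / w) (matrix_inv (M 0) ** (M 0 - M w))" for w
    have Fent: "F w $ a $ b = (h a b 0 - h a b w) / w" for w a b
      by (simp add: F_def csm_def matrix_matrix_mult_def h_def Mi_def
        sum_subtractf right_diff_distrib diff_divide_distrib)
    have lim: "(F \<longlongrightarrow> (\<chi> a b. - \<alpha> a b 1)) (at 0)"
    proof (intro vec_tendstoI)
      fix a b
      have "DERIV (h a b) 0 :> deriv (h a b) 0"
        using hhol r by (intro holomorphic_derivI[of _ "ball 0 r"]) auto
      then have "((\<lambda>w. (h a b w - h a b 0) / w) \<longlongrightarrow> \<alpha> a b 1) (at 0)"
        unfolding DERIV_def hd by simp
      then have "((\<lambda>w. - ((h a b w - h a b 0) / w)) \<longlongrightarrow> - \<alpha> a b 1) (at 0)"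
        by (intro tendsto_minus)
      then show "((\<lambda>w. F w $ a $ b) \<longlongrightarrow> (\<chi> a b. - \<alpha> a b 1) $ a $ b) (at 0)"
        by (simp add: Fent minus_divide_left)
    qed
    have "Bfun M 0 = (\<chi> a b. - \<alpha> a b 1)"
      unfolding Bfun_def F_def[symmetric] using lim by (simp add: tendsto_Lim)
    then have "Bfun M w $ a $ b = - \<alpha> a b 1" using True by simp
    moreover have "(\<lambda>j. - \<alpha> a b (Suc j) * w^j) sums (- \<alpha> a b 1)"
      using True powser_sums_zero[where a="\<lambda>j. - \<alpha> a b (Suc j)"] by simp
    ultimately show ?thesis by simp
  qed
  have ff: "fact i / fact (Suc i) = (1 / of_nat (Suc i) :: complex)"
  proof -
    have "fact (Suc i) = (of_nat (Suc i) * fact i :: complex)" by (rule fact_Suc)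
    moreover have "(fact i :: complex) \<noteq> 0" by simp
    ultimately show ?thesis by (simp del: of_nat_Suc fact_Suc)
  qed
  have "(deriv ^^ i) (\<lambda>w. Bfun M w $ a $ b) 0 = fact i * (- \<alpha> a b (Suc i))" for a b
    by (rule coeff_ident[OF r]) (rule Bser)
  also have "fact i * (- \<alpha> a b (Suc i)) = - (fact i / fact (Suc i)) * (\<Sum>k\<in>UNIV. Mi $ a $ k * (deriv ^^ Suc i) (\<lambda>w. M w $ k $ b) 0)" for a b
    unfolding \<alpha>_def by (simp add: sum_divide_distrib[symmetric] del: fact_Suc)
  finally show ?thesis
    unfolding ff by (simp add: vec_eq_iff mderiv_def csm_def Mi_def matrix_matrix_mult_def del: fact_Suc)
qed

definition single :: "'n \<Rightarrow> complex \<Rightarrow> complex^'n" where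
  "single j z = (\<chi> k. if k = j then z else 0)"

lemma bl_single: "bounded_linear (single j)"
proof (rule bounded_linear_intro[where K=1])
  show "single j (x + y) = single j x + single j y" for x y
    by (simp add: single_def vec_eq_iff)
  show "single j (r *\<^sub>R x) = r *\<^sub>R single j x" for r x
    by (simp add: single_def vec_eq_iff)
  show "norm (single j x) \<le> norm x * 1" for x
  proof -
    have "norm (single j x) \<le> (\<Sum>k\<in>UNIV. norm (single j x $ k))" by (rule norm_vec_le_sum)
    also have "\<dots> = (\<Sum>k\<in>UNIV. if k = j then norm x else 0)"
      by (intro sum.cong) (auto simp: single_def)
    also have "\<dots> = norm x" by simp
    finally show ?thesis by simp
  qed
qed

lemma vec_as_single_sum: "(\<chi> j. g j) = (\<Sum>j\<in>UNIV. single j (g j))"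
  by (simp add: vec_eq_iff single_def)

lemma vecfun_has_vector_derivative:
  fixes H :: "'n::finite \<Rightarrow> complex \<Rightarrow> complex"
  assumes "\<And>j. H j holomorphic_on UNIV"
  shows "((\<lambda>t. \<chi> j. H j (of_real t)) has_vector_derivative (\<chi> j. deriv (H j) (of_real t))) (at t within s)"
proof -
  have d: "(H j has_field_derivative deriv (H j) (of_real t)) (at (of_real t))" for j
    using assms by (intro holomorphic_derivI[of _ UNIV]) auto
  have "((\<lambda>t. \<Sum>j\<in>UNIV. single j (H j (of_real t))) has_vector_derivative
          (\<Sum>j\<in>UNIV. single j (deriv (H j) (of_real t)))) (at t within s)"
    by (intro has_vector_derivative_sum bounded_linear.has_vector_derivative[OF bl_single]
        has_vector_derivative_real_field d)
  then show ?thesis by (simp only: vec_as_single_sum)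
qed

lemma vderiv_Suc: "vderiv (Suc i) g = (\<lambda>t. vector_derivative (vderiv i g) (at t))"
  by (simp add: vderiv_def)

lemma vderiv_entire:
  fixes G :: "'n::finite \<Rightarrow> complex \<Rightarrow> complex"
  assumes hol: "\<And>j. G j holomorphic_on UNIV"
  shows "vderiv i (\<lambda>t. \<chi> j. G j (of_real t)) = (\<lambda>t. \<chi> j. (deriv ^^ i) (G j) (of_real t))"
proof (induction i)
  case 0 then show ?case by (simp add: vderiv_def)
next
  case (Suc i)
  have h: "(deriv ^^ i) (G j) holomorphic_on UNIV" for j
    by (rule holomorphic_higher_deriv[OF hol]) simp
  show ?case
    unfolding vderiv_Suc Suc
    by (rule ext, rule vector_derivative_at, subst funpow.simps(2), simp only: o_def)
       (rule vecfun_has_vector_derivative[OF h])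
qed

lemma oint_antideriv:
  fixes \<Phi> :: "real \<Rightarrow> complex^'n"
  assumes d: "\<And>t. (\<Phi> has_vector_derivative g t) (at t)"
  shows "oint g \<theta> = \<Phi> \<theta> - \<Phi> 0"
proof (cases "0 \<le> \<theta>")
  case True
  have "(g has_integral (\<Phi> \<theta> - \<Phi> 0)) {0..\<theta>}"
    by (rule fundamental_theorem_of_calculus[OF True]) (auto intro: has_vector_derivative_at_within d)
  then show ?thesis using True by (simp add: oint_def integral_unique)
next
  case False
  have "(g has_integral (\<Phi> 0 - \<Phi> \<theta>)) {\<theta>..0}"
    by (rule fundamental_theorem_of_calculus) (use False in \<open>auto intro: has_vector_derivative_at_within d\<close>)
  then show ?thesis using False by (simp add: oint_def integral_unique)
qed

lemma entire_vec_series: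
  fixes v :: "nat \<Rightarrow> complex^'n"
  assumes sv: "\<And>j (R::real). summable (\<lambda>k. norm (v k $ j) * R^k)"
  shows "vderiv i (\<lambda>t. \<chi> j. \<Sum>k. v k $ j * (of_real t)^k) 0 = fact i *s v i"
    and "oint (\<lambda>t. \<chi> j. \<Sum>k. v k $ j * (of_real t)^k) \<theta>
          = (\<chi> j. \<Sum>k. (if k = 0 then 0 else v (k-1) $ j / of_nat k) * (of_real \<theta>)^k)"
proof -
  define G where "G j z = (\<Sum>k. v k $ j * z^k)" for j z
  have sG: "summable (\<lambda>k. v k $ j * z^k)" for j z
    by (rule summable_norm_cancel) (use sv[of j "norm z"] in \<open>simp add: norm_mult norm_power\<close>)
  have Gd: "(G j has_field_derivative (\<Sum>k. diffs (\<lambda>k. v k $ j) k * z^k)) (at z)" for j z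
    unfolding G_def[abs_def] by (rule termdiffs_strong_converges_everywhere) (rule sG)
  have hol: "G j holomorphic_on UNIV" for j
    using Gd by (auto simp: holomorphic_on_open)
  show "vderiv i (\<lambda>t. \<chi> j. \<Sum>k. v k $ j * (of_real t)^k) 0 = fact i *s v i"
  proof -
    have "vderiv i (\<lambda>t. \<chi> j. G j (of_real t)) 0 = (\<chi> j. (deriv ^^ i) (G j) 0)"
      using vderiv_entire[where G=G and i=i] hol by simp
    also have "\<dots> = fact i *s v i"
    proof -
      have "(deriv ^^ i) (G j) 0 = fact i * v i $ j" for j
        by (rule coeff_ident[of 1]) (auto simp: G_def summable_sums sG)
      then show ?thesis by (simp add: vec_eq_iff)
    qed
    finally show ?thesis by (simp add: G_def)
  qed
  define c where "c j n = (if n = 0 then 0 else v (n-1) $ j / of_nat n)" for j n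
  have sc: "summable (\<lambda>n. c j n * y^n)" for j y
  proof -
    have "summable (\<lambda>n. c j (Suc n) * y^(Suc n))"
    proof (rule summable_comparison_test[where g="\<lambda>n. norm y * (norm (v n $ j) * norm y ^ n)"])
      show "summable (\<lambda>n. norm y * (norm (v n $ j) * norm y ^ n))"
        by (intro summable_mult sv)
      show "\<exists>N. \<forall>n\<ge>N. norm (c j (Suc n) * y ^ Suc n) \<le> norm y * (norm (v n $ j) * norm y ^ n)"
      proof (intro exI allI impI)
        fix n :: nat
        have "norm (c j (Suc n) * y ^ Suc n) = norm (v n $ j) * norm y ^ Suc n / (Suc n)"
          by (simp add: c_def norm_mult norm_divide norm_power del: of_nat_Suc)
        also have "\<dots> \<le> norm (v n $ j) * norm y ^ Suc n"
          using divide_left_mono[of 1 "real (Suc n)" "norm (v n $ j) * norm y ^ Suc n"] by simp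
        finally show "norm (c j (Suc n) * y ^ Suc n) \<le> norm y * (norm (v n $ j) * norm y ^ n)"
          by (simp add: mult_ac)
      qed
    qed
    then show ?thesis by (subst (asm) summable_Suc_iff)
  qed
  have dc: "diffs (c j) = (\<lambda>k. v k $ j)" for j
    by (rule ext) (simp add: diffs_def c_def del: of_nat_Suc)
  define Kf where "Kf j z = (\<Sum>n. c j n * z^n)" for j z
  have Kd: "(Kf j has_field_derivative G j z) (at z)" for j z
    using termdiffs_strong_converges_everywhere[of "c j" z, OF sc]
    unfolding Kf_def[abs_def] G_def dc by simp
  have Khol: "Kf j holomorphic_on UNIV" for j
    using Kd by (auto simp: holomorphic_on_open)
  have "((\<lambda>t. \<chi> j. Kf j (of_real t)) has_vector_derivative (\<chi> j. G j (of_real t))) (at t)" for t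
  proof -
    have "deriv (Kf j) z = G j z" for j z using Kd by (rule DERIV_imp_deriv)
    then show ?thesis
      using vecfun_has_vector_derivative[where H=Kf and t=t and s=UNIV] Khol by simp
  qed
  then have "oint (\<lambda>t. \<chi> j. G j (of_real t)) \<theta> = (\<chi> j. Kf j (of_real \<theta>)) - (\<chi> j. Kf j (of_real 0))"
    by (rule oint_antideriv)
  also have "(\<chi> j. Kf j (of_real 0)) = 0"
    by (simp add: vec_eq_iff Kf_def c_def)
  finally show "oint (\<lambda>t. \<chi> j. \<Sum>k. v k $ j * (of_real t)^k) \<theta>
          = (\<chi> j. \<Sum>k. (if k = 0 then 0 else v (k-1) $ j / of_nat k) * (of_real \<theta>)^k)"
    by (simp add: G_def Kf_def c_def)
qed

lemma mv_entry_bound: "norm ((A *v u) $ j) \<le> (\<Sum>l\<in>UNIV. norm (A $ j $ l) * norm (u $ l))"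
  for A :: "complex^'m^'n"
  unfolding matrix_vector_mult_def by (simp add: order_trans[OF norm_sum] norm_mult)

lemma mat_sumsI:
  fixes f :: "nat \<Rightarrow> complex^'m^'n"
  assumes "\<And>a b. (\<lambda>k. f k $ a $ b) sums (s $ a $ b)"
  shows "f sums s"
  by (intro vec_sumsI assms)

lemma mv_sums:
  fixes f :: "nat \<Rightarrow> complex^'m^'n"
  assumes "f sums s"
  shows "(\<lambda>k. f k *v u) sums (s *v u)"
proof (rule vec_sumsI)
  fix a
  have "(\<lambda>k. f k $ a $ b) sums (s $ a $ b)" for b
    using sums_vec_nth[OF sums_vec_nth[OF assms, of a], of b] .
  then have "(\<lambda>k. \<Sum>b\<in>UNIV. f k $ a $ b * u $ b) sums (\<Sum>b\<in>UNIV. s $ a $ b * u $ b)"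
    by (intro sums_sum sums_mult2) auto
  then show "(\<lambda>k. (f k *v u) $ a) sums ((s *v u) $ a)"
    by (simp add: matrix_vector_mult_def)
qed

lemma mv_smult: "A *v (a *s u) = a *s (A *v u)" for A :: "complex^'m^'n"
  by (simp add: vec_eq_iff matrix_vector_mult_def sum_distrib_left mult_ac)

lemma sum_shift_Suc: "(\<Sum>i<N. f (Suc i)) = (\<Sum>k\<in>{1..N}. f k)"
  by (induction N) (auto simp: atLeastAtMostSuc_conv add.commute)

lemma expNv_sums:
  fixes S :: "complex^'p^'p"
  shows "(\<lambda>k. if int k > Nn then (t ^ k / of_nat (fact k)) *s (matpow S k *v u) else 0) sums expNv Nn t S u"
proof -
  obtain K where K: "K \<ge> 1" "\<And>m i j. norm (matpow S m $ i $ j) \<le> K ^ m"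
    using matpow_entry_bound[of S] by blast
  define f where "f k = (if int k > Nn then (t ^ k / of_nat (fact k)) *s (matpow S k *v u) else 0)" for k
  define U where "U = (\<Sum>m\<in>UNIV. norm (u $ m))"
  have U0: "U \<ge> 0" by (simp add: U_def sum_nonneg)
  have sc: "summable (\<lambda>k. f k $ l)" for l
  proof (rule summable_comparison_test[where g="\<lambda>k. U * (inverse (fact k) * (norm t * K)^k)"])
    show "summable (\<lambda>k. U * (inverse (fact k) * (norm t * K)^k))"
      by (intro summable_mult summable_exp)
    show "\<exists>N. \<forall>n\<ge>N. norm (f n $ l) \<le> U * (inverse (fact n) * (norm t * K)^n)"
    proof (intro exI allI impI)
      fix n :: nat
      have b: "norm ((matpow S n *v u) $ l) \<le> U * K^n"
      proof -
        have "norm ((matpow S n *v u) $ l) \<le> (\<Sum>m\<in>UNIV. norm (matpow S n $ l $ m) * norm (u $ m))"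
          by (rule mv_entry_bound)
        also have "\<dots> \<le> (\<Sum>m\<in>UNIV. K^n * norm (u $ m))"
          by (intro sum_mono mult_right_mono K(2)) auto
        finally show ?thesis by (simp add: U_def sum_distrib_left mult_ac)
      qed
      have "norm (f n $ l) \<le> norm t ^ n / fact n * (U * K^n)"
        using b U0 K(1) by (auto simp: f_def norm_mult norm_divide norm_power intro!: divide_right_mono mult_left_mono mult_nonneg_nonneg)
      then show "norm (f n $ l) \<le> U * (inverse (fact n) * (norm t * K)^n)"
        by (simp add: field_simps power_mult_distrib)
    qed
  qed
  then have "f sums (\<chi> l. \<Sum>k. f k $ l)"
    by (intro vec_sumsI) (simp add: summable_sums)
  moreover have "expNv Nn t S u = suminf f" unfolding expNv_def f_def by simp
  ultimately show ?thesis unfolding f_def[symmetric] by (simp add: sums_iff)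
qed


theorem mainTheorem2:
  fixes r :: real and m N :: nat
    and M :: "complex \<Rightarrow> complex^'n^'n"
    and Ms :: "nat \<Rightarrow> complex^'n^'n" and f :: "nat \<Rightarrow> complex \<Rightarrow> complex"
    and Y :: "complex^'p^'n" and S :: "complex^'p^'p" and c :: "complex^'p"
    and x :: "nat \<Rightarrow> complex^'n" and \<phi> :: "real \<Rightarrow> complex^'n"
  assumes r_pos: "r > 0"
    and f_an: "\<And>i. i \<in> {1..m} \<Longrightarrow> f i analytic_on ball 0 r"
    and M_rep: "\<And>l. l \<in> ball 0 r \<Longrightarrow> M l = (\<Sum>i\<in>{1..m}. csm (f i l) (Ms i))"
    and M0_inv: "invertible (M 0)"
    and S_inv: "invertible S"
    and spec: "mspectrum S \<subseteq> ball 0 r"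
    and phi_def: "\<And>\<theta>. \<phi> \<theta> = Y *v expNv (int N - 1) (complex_of_real \<theta>) S c
                       + (\<Sum>j<N. (complex_of_real \<theta> ^ j) *s x j)"
  shows "let cp = matrix_inv S *v c;
             xp = (\<lambda>j. if j = 0
                     then - (matrix_inv (M 0) *v (MMN M N Y S *v cp
                              + (\<Sum>i\<in>{1..N}. mderiv i M 0 *v ((1 / of_nat i) *s x (i - 1)))))
                     else (1 / of_nat j) *s x (j - 1))
         in summable (Bterm M \<phi>) \<and>
            (\<forall>\<theta>. Bop M \<phi> \<theta> = Y *v expNv (int N) (complex_of_real \<theta>) S cp
                             + (\<Sum>j\<in>{0..N}. (complex_of_real \<theta> ^ j) *s xp j))"
proof -
  define cp where "cp = matrix_inv S *v c"
  define xp where "xp = (\<lambda>j. if j = 0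
                     then - (matrix_inv (M 0) *v (MMN M N Y S *v cp
                              + (\<Sum>i\<in>{1..N}. mderiv i M 0 *v ((1 / of_nat i) *s x (i - 1)))))
                     else (1 / of_nat j) *s x (j - 1))"
  have Mhol: "(\<lambda>w. M w $ a $ b) holomorphic_on ball 0 r" for a b
  proof -
    have "(\<lambda>w. \<Sum>i\<in>{1..m}. f i w * Ms i $ a $ b) holomorphic_on ball 0 r"
      by (intro holomorphic_intros analytic_imp_holomorphic f_an) auto
    then show ?thesis
      by (rule holomorphic_transform) (simp add: M_rep csm_def)
  qed
  have DB: "mderiv i (Bfun M) 0 = - csm (1 / of_nat (Suc i)) (matrix_inv (M 0) ** mderiv (Suc i) M 0)" for i
    by (rule Bfun_deriv[OF r_pos Mhol])
  obtain \<rho> C where \<rho>: "0 < \<rho>" "\<rho> < r" and PC: "\<And>m i j. norm (matpow S m $ i $ j) \<le> C * \<rho>^m"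
    using spectral_bound[OF spec r_pos] by blast
  obtain K where K: "K \<ge> 1" "\<And>m i j. norm (matpow S m $ i $ j) \<le> K ^ m"
    using matpow_entry_bound[of S] by blast
  have Scp: "S *v cp = c"
    unfolding cp_def matrix_vector_mul_assoc matrix_inv_props(1)[OF S_inv] by simp
  have Pcp: "matpow S (Suc k) *v cp = matpow S k *v c" for k
    by (simp add: matpow_Suc' matrix_vector_mul_assoc[symmetric] Scp)
  define v where "v k = (if N \<le> k then (1 / of_nat (fact k)) *s (Y *v (matpow S k *v c)) else 0)
      + (if k < N then x k else 0)" for k
  have sv: "summable (\<lambda>k. norm (v k $ j) * R^k)" for j and R :: real
  proof -
    define U where "U = (\<Sum>m\<in>UNIV. norm (c $ m))"
    define Q where "Q = (\<Sum>l\<in>UNIV. norm (Y $ j $ l)) * U"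
    have bnd: "norm ((Y *v (matpow S k *v c)) $ j) \<le> Q * K^k" for k
    proof -
      have "norm ((Y *v (matpow S k *v c)) $ j) \<le> (\<Sum>l\<in>UNIV. norm (Y$j$l) * norm ((matpow S k *v c) $ l))"
        by (rule mv_entry_bound)
      also have "\<dots> \<le> (\<Sum>l\<in>UNIV. norm (Y$j$l) * (U * K^k))"
      proof (intro sum_mono mult_left_mono)
        fix l
        have "norm ((matpow S k *v c) $ l) \<le> (\<Sum>m\<in>UNIV. norm (matpow S k $ l $ m) * norm (c $ m))"
          by (rule mv_entry_bound)
        also have "\<dots> \<le> (\<Sum>m\<in>UNIV. K^k * norm (c $ m))"
          by (intro sum_mono mult_right_mono K(2)) auto
        finally show "norm ((matpow S k *v c) $ l) \<le> U * K^k"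
          by (simp add: U_def sum_distrib_left mult_ac)
      qed auto
      also have "\<dots> = Q * K^k" by (simp add: Q_def sum_distrib_right mult.assoc)
      finally show ?thesis .
    qed
    show ?thesis
    proof (rule summable_comparison_test[where g="\<lambda>k. Q * (inverse (fact k) * (\<bar>R\<bar> * K)^k)"])
      show "summable (\<lambda>k. Q * (inverse (fact k) * (\<bar>R\<bar> * K)^k))"
        by (intro summable_mult summable_exp)
      show "\<exists>N'. \<forall>k\<ge>N'. norm (norm (v k $ j) * R^k) \<le> Q * (inverse (fact k) * (\<bar>R\<bar> * K)^k)"
      proof (intro exI[of _ N] allI impI)
        fix k assume kN: "N \<le> k"
        then have "v k $ j = (1 / of_nat (fact k)) * (Y *v (matpow S k *v c)) $ j"
          by (simp add: v_def)
        then have "norm (norm (v k $ j) * R^k) = norm ((Y *v (matpow S k *v c)) $ j) / fact k * \<bar>R\<bar>^k"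
          by (simp add: norm_mult norm_divide power_abs abs_mult)
        also have "\<dots> \<le> Q * K^k / fact k * \<bar>R\<bar>^k"
          by (intro mult_right_mono divide_right_mono bnd) auto
        finally show "norm (norm (v k $ j) * R^k) \<le> Q * (inverse (fact k) * (\<bar>R\<bar> * K)^k)"
          by (simp add: field_simps power_mult_distrib)
      qed
    qed
  qed
  have phi_ser: "\<phi> = (\<lambda>t. \<chi> j. \<Sum>k. v k $ j * (of_real t)^k)"
  proof (rule ext)
    fix \<theta> :: real
    define t where "t = complex_of_real \<theta>"
    have "(\<lambda>k. v k $ j * t^k) sums (\<phi> \<theta> $ j)" for j
    proof -
      have "(\<lambda>k. if int k > int N - 1 then (t^k / of_nat (fact k)) *s (matpow S k *v c) else 0)
              sums expNv (int N - 1) t S c" by (rule expNv_sums)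
      then have "(\<lambda>k. Y *v (if int k > int N - 1 then (t^k / of_nat (fact k)) *s (matpow S k *v c) else 0))
              sums (Y *v expNv (int N - 1) t S c)"
        by (rule bounded_linear.sums[OF matrix_vector_mul_bounded_linear])
      then have a: "(\<lambda>k. (Y *v (if int k > int N - 1 then (t^k / of_nat (fact k)) *s (matpow S k *v c) else 0)) $ j)
              sums ((Y *v expNv (int N - 1) t S c) $ j)"
        by (rule sums_vec_nth)
      have b: "(\<lambda>k. if k \<in> {..<N} then t^k * x k $ j else 0) sums (\<Sum>k\<in>{..<N}. t^k * x k $ j)"
        by (rule sums_If_finite_set) simp
      have "(\<lambda>k. (Y *v (if int k > int N - 1 then (t^k / of_nat (fact k)) *s (matpow S k *v c) else 0)) $ j
               + (if k \<in> {..<N} then t^k * x k $ j else 0))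
            sums ((Y *v expNv (int N - 1) t S c) $ j + (\<Sum>k\<in>{..<N}. t^k * x k $ j))"
        by (rule sums_add[OF a b])
      moreover have "(Y *v (if int k > int N - 1 then (t^k / of_nat (fact k)) *s (matpow S k *v c) else 0)) $ j
               + (if k \<in> {..<N} then t^k * x k $ j else 0) = v k $ j * t^k" for k
        by (cases "N \<le> k") (auto simp: v_def mv_smult)
      moreover have "\<phi> \<theta> $ j = (Y *v expNv (int N - 1) t S c) $ j + (\<Sum>k\<in>{..<N}. t^k * x k $ j)"
        by (simp add: phi_def t_def)
      ultimately show ?thesis by simp
    qed
    then show "\<phi> \<theta> = (\<chi> j. \<Sum>k. v k $ j * (of_real \<theta>)^k)"
      by (simp add: vec_eq_iff sums_iff t_def)
  qed
  have vd: "vderiv i \<phi> 0 = fact i *s v i" for i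
    unfolding phi_ser by (rule entire_vec_series(1)[OF sv])
  define Mi where "Mi = matrix_inv (M 0)"
  define Md where "Md k = mderiv k M 0" for k
  define W where "W k = (if k > N then csm (1 / of_nat (fact k)) (Md k ** Y ** matpow S k) else 0)" for k
  define X where "X k = (if k \<in> {1..N} then Md k *v ((1 / of_nat k) *s x (k - 1)) else 0)" for k
  have mneg: "(- A) *v u = - (A *v u)" for A :: "complex^'n^'n" and u
    by (simp add: vec_eq_iff matrix_vector_mult_def sum_negf)
  have Bt: "Bterm M \<phi> i = - (Mi *v ((1 / of_nat (Suc i)) *s (Md (Suc i) *v v i)))" for i
  proof -
    have f0: "(fact i :: complex) \<noteq> 0" by simp
    have "Bterm M \<phi> i = (1 / fact i) *s ((- csm (1 / of_nat (Suc i)) (Mi ** Md (Suc i))) *v (fact i *s v i))"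
      unfolding Bterm_def vd DB Mi_def Md_def by simp
    also have "\<dots> = - (((1 / fact i) * (1 / of_nat (Suc i) * fact i)) *s (Mi *v (Md (Suc i) *v v i)))"
      by (simp add: mneg csm_mult_vec mv_smult matrix_vector_mul_assoc[symmetric] vector_smult_assoc
          vector_smult_rneg del: of_nat_Suc)
    also have "(1 / fact i) * (1 / of_nat (Suc i) * fact i) = (1 / of_nat (Suc i) :: complex)"
      using f0 by (simp del: of_nat_Suc)
    finally show ?thesis by (simp add: mv_smult)
  qed
  have T: "(1 / of_nat (Suc i)) *s (Md (Suc i) *v v i) = W (Suc i) *v cp + X (Suc i)" for i
  proof (cases "N \<le> i")
    case True
    have ff: "(1 / of_nat (Suc i)) * (1 / of_nat (fact i)) = (1 / of_nat (fact (Suc i)) :: complex)"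
      by (simp add: fact_Suc del: of_nat_Suc; simp add: algebra_simps)
    have "(1 / of_nat (Suc i)) *s (Md (Suc i) *v v i)
        = ((1 / of_nat (Suc i)) * (1 / of_nat (fact i))) *s (Md (Suc i) *v (Y *v (matpow S i *v c)))"
      using True by (simp add: v_def mv_smult vector_smult_assoc del: of_nat_Suc)
    also have "\<dots> = W (Suc i) *v cp"
      unfolding ff using True
      by (simp add: W_def csm_mult_vec matrix_vector_mul_assoc[symmetric] Pcp del: of_nat_Suc fact_Suc)
    finally show ?thesis using True by (simp add: X_def)
  next
    case False
    then show ?thesis by (simp add: v_def W_def X_def mv_smult del: of_nat_Suc)
  qed
  have C0: "C \<ge> 0" using PC[of 0] by (metis norm_ge_zero order_trans power_0 mult_1_right)
  have Wsum: "W sums MMN M N Y S"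
  proof -
    define tc where "tc a l k = (deriv ^^ k) (\<lambda>w. M w $ a $ l) 0 / fact k" for a l k
    have stc: "summable (\<lambda>k. norm (tc a l k) * \<rho>^k)" for a l
      unfolding tc_def by (rule taylor_abs_summable[OF Mhol]) (use \<rho> in auto)
    have sW: "summable (\<lambda>k. W k $ a $ b)" for a b
    proof (rule summable_comparison_test[where g="\<lambda>k. \<Sum>m\<in>UNIV. \<Sum>l\<in>UNIV. norm (Y $ l $ m) * C * (norm (tc a l k) * \<rho>^k)"])
      show "summable (\<lambda>k. \<Sum>m\<in>UNIV. \<Sum>l\<in>UNIV. norm (Y $ l $ m) * C * (norm (tc a l k) * \<rho>^k))"
        by (intro summable_sum summable_mult stc)
      show "\<exists>N'. \<forall>k\<ge>N'. norm (W k $ a $ b) \<le> (\<Sum>m\<in>UNIV. \<Sum>l\<in>UNIV. norm (Y $ l $ m) * C * (norm (tc a l k) * \<rho>^k))"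
      proof (intro exI allI impI)
        fix k :: nat
        have g0: "0 \<le> (\<Sum>m\<in>UNIV. \<Sum>l\<in>UNIV. norm (Y $ l $ m) * C * (norm (tc a l k) * \<rho>^k))"
          using C0 \<rho> by (intro sum_nonneg) auto
        show "norm (W k $ a $ b) \<le> (\<Sum>m\<in>UNIV. \<Sum>l\<in>UNIV. norm (Y $ l $ m) * C * (norm (tc a l k) * \<rho>^k))"
        proof (cases "k > N")
          case False then show ?thesis using g0 by (simp add: W_def)
        next
          case True
          have "W k $ a $ b = (\<Sum>m\<in>UNIV. \<Sum>l\<in>UNIV. tc a l k * Y $ l $ m * matpow S k $ m $ b)"
            using True by (simp add: W_def csm_def matrix_matrix_mult_def tc_def Md_def mderiv_def
                sum_distrib_left sum_distrib_right mult_ac)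
          also have "norm \<dots> \<le> (\<Sum>m\<in>UNIV. \<Sum>l\<in>UNIV. norm (tc a l k * Y $ l $ m * matpow S k $ m $ b))"
            by (rule order_trans[OF norm_sum sum_mono[OF norm_sum]])
          also have "\<dots> \<le> (\<Sum>m\<in>UNIV. \<Sum>l\<in>UNIV. norm (Y $ l $ m) * C * (norm (tc a l k) * \<rho>^k))"
          proof (intro sum_mono)
            fix m l
            have "norm (tc a l k * Y $ l $ m * matpow S k $ m $ b) = norm (tc a l k) * norm (Y $ l $ m) * norm (matpow S k $ m $ b)"
              by (simp add: norm_mult)
            also have "\<dots> \<le> norm (tc a l k) * norm (Y $ l $ m) * (C * \<rho>^k)"
              by (intro mult_left_mono PC) auto
            finally show "norm (tc a l k * Y $ l $ m * matpow S k $ m $ b) \<le> norm (Y $ l $ m) * C * (norm (tc a l k) * \<rho>^k)"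
              by (simp add: mult_ac)
          qed
          finally show ?thesis .
        qed
      qed
    qed
    have "W sums (\<chi> a b. \<Sum>k. W k $ a $ b)"
      by (rule mat_sumsI) (simp add: summable_sums sW)
    moreover have "MMN M N Y S = suminf W"
      unfolding MMN_def W_def Md_def ..
    ultimately show ?thesis by (simp add: sums_iff)
  qed
  have Bsum: "Bterm M \<phi> sums xp 0"
  proof -
    have "(\<lambda>k. W k *v cp) sums (MMN M N Y S *v cp)" by (rule mv_sums[OF Wsum])
    then have s1: "(\<lambda>i. W (Suc i) *v cp) sums (MMN M N Y S *v cp)"
      by (subst sums_Suc_iff) (simp add: W_def)
    have "(\<lambda>i. if i \<in> {..<N} then X (Suc i) else 0) sums (\<Sum>i\<in>{..<N}. X (Suc i))"
      by (rule sums_If_finite_set) simp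
    moreover have "(\<lambda>i. if i \<in> {..<N} then X (Suc i) else 0) = (\<lambda>i. X (Suc i))"
      by (auto simp: X_def)
    moreover have "(\<Sum>i\<in>{..<N}. X (Suc i)) = (\<Sum>k\<in>{1..N}. Md k *v ((1 / of_nat k) *s x (k - 1)))"
      unfolding sum_shift_Suc by (intro sum.cong) (auto simp: X_def)
    ultimately have s2: "(\<lambda>i. X (Suc i)) sums (\<Sum>k\<in>{1..N}. Md k *v ((1 / of_nat k) *s x (k - 1)))"
      by simp
    have "(\<lambda>i. W (Suc i) *v cp + X (Suc i)) sums (MMN M N Y S *v cp + (\<Sum>k\<in>{1..N}. Md k *v ((1 / of_nat k) *s x (k - 1))))"
      by (rule sums_add[OF s1 s2])
    then have "(\<lambda>i. Mi *v (W (Suc i) *v cp + X (Suc i))) sums (Mi *v (MMN M N Y S *v cp + (\<Sum>k\<in>{1..N}. Md k *v ((1 / of_nat k) *s x (k - 1)))))"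
      by (rule bounded_linear.sums[OF matrix_vector_mul_bounded_linear])
    then have "(\<lambda>i. - (Mi *v (W (Suc i) *v cp + X (Suc i)))) sums
       (- (Mi *v (MMN M N Y S *v cp + (\<Sum>k\<in>{1..N}. Md k *v ((1 / of_nat k) *s x (k - 1))))))"
      by (rule sums_minus)
    moreover have "- (Mi *v (MMN M N Y S *v cp + (\<Sum>k\<in>{1..N}. Md k *v ((1 / of_nat k) *s x (k - 1))))) = xp 0"
      by (simp add: xp_def Mi_def Md_def)
    ultimately have "(\<lambda>i. - (Mi *v (W (Suc i) *v cp + X (Suc i)))) sums xp 0" by simp
    moreover have "Bterm M \<phi> = (\<lambda>i. - (Mi *v (W (Suc i) *v cp + X (Suc i))))"
      by (rule ext) (simp only: Bt T)
    ultimately show ?thesis by simp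
  qed
  have oi: "oint \<phi> \<theta> = Y *v expNv (int N) (complex_of_real \<theta>) S cp
                             + (\<Sum>j\<in>{1..N}. (complex_of_real \<theta> ^ j) *s xp j)" for \<theta>
  proof -
    define t where "t = complex_of_real \<theta>"
    define E where "E k = (if int k > int N then (t ^ k / of_nat (fact k)) *s (matpow S k *v cp) else 0)" for k
    have ser: "(\<lambda>k. (if k = 0 then 0 else v (k-1) $ j / of_nat k) * t^k) sums
          ((Y *v expNv (int N) t S cp) $ j + (\<Sum>k\<in>{1..N}. t^k * xp k $ j))" for j
    proof -
      have "E sums expNv (int N) t S cp" unfolding E_def by (rule expNv_sums)
      then have "(\<lambda>k. Y *v E k) sums (Y *v expNv (int N) t S cp)"
        by (rule bounded_linear.sums[OF matrix_vector_mul_bounded_linear])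
      then have a: "(\<lambda>k. (Y *v E k) $ j) sums ((Y *v expNv (int N) t S cp) $ j)"
        by (rule sums_vec_nth)
      have b: "(\<lambda>k. if k \<in> {1..N} then t^k * xp k $ j else 0) sums (\<Sum>k\<in>{1..N}. t^k * xp k $ j)"
        by (rule sums_If_finite_set) simp
      have eq: "(Y *v E k) $ j + (if k \<in> {1..N} then t^k * xp k $ j else 0)
              = (if k = 0 then 0 else v (k-1) $ j / of_nat k) * t^k" for k
      proof (cases k)
        case 0 then show ?thesis by (simp add: E_def)
      next
        case (Suc i)
        show ?thesis
        proof (cases "N \<le> i")
          case True
          have ff: "t ^ Suc i / of_nat (fact (Suc i)) = (1 / of_nat (fact i)) / of_nat (Suc i) * t ^ Suc i"
            by (simp add: fact_Suc del: of_nat_Suc power_Suc; simp add: algebra_simps)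
          have "(Y *v E k) $ j = t ^ Suc i / of_nat (fact (Suc i)) * (Y *v (matpow S i *v c)) $ j"
            using True Suc by (simp add: E_def mv_smult Pcp del: of_nat_Suc fact_Suc power_Suc)
          then show ?thesis using True Suc unfolding ff by (simp add: v_def del: of_nat_Suc fact_Suc power_Suc)
        next
          case False
          then show ?thesis using Suc by (simp add: E_def v_def xp_def del: of_nat_Suc power_Suc)
        qed
      qed
      show ?thesis using sums_add[OF a b] unfolding eq .
    qed
    have "oint \<phi> \<theta> = (\<chi> j. \<Sum>k. (if k = 0 then 0 else v (k-1) $ j / of_nat k) * t^k)"
      unfolding phi_ser t_def by (rule entire_vec_series(2)[OF sv])
    also have "\<dots> = Y *v expNv (int N) t S cp + (\<Sum>j\<in>{1..N}. (t ^ j) *s xp j)"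
      using ser by (simp add: vec_eq_iff sums_iff)
    finally show ?thesis by (simp add: t_def)
  qed
  have "summable (Bterm M \<phi>) \<and>
            (\<forall>\<theta>. Bop M \<phi> \<theta> = Y *v expNv (int N) (complex_of_real \<theta>) S cp
                             + (\<Sum>j\<in>{0..N}. (complex_of_real \<theta> ^ j) *s xp j))"
  proof (intro conjI allI)
    show "summable (Bterm M \<phi>)" using Bsum by (rule sums_summable)
    fix \<theta>
    have "(\<Sum>j\<in>{0..N}. (complex_of_real \<theta> ^ j) *s xp j) = xp 0 + (\<Sum>j\<in>{1..N}. (complex_of_real \<theta> ^ j) *s xp j)"
      by (subst sum.atLeast_Suc_atMost) auto
    then show "Bop M \<phi> \<theta> = Y *v expNv (int N) (complex_of_real \<theta>) S cp
                             + (\<Sum>j\<in>{0..N}. (complex_of_real \<theta> ^ j) *s xp j)"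
      unfolding Bop_def oi using Bsum by (simp add: sums_iff algebra_simps)
  qed
  then show ?thesis unfolding Let_def xp_def cp_def .
qed

end
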